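(* Let $\phi\colon\mathbb{R}\to\mathbb{R}$ be an increasing homeomorphism with $\phi(0)=0$, $f\colon\mathbb{R}\to\mathbb{R}$ continuous, and $g\colon[0,T]\times\mathbb{R}\to\mathbb{R}$ a Carathéodory function such that there is $\rho\in L^1([0,T],\mathbb{R}^+)$ with $|g(t,u)|\le\rho(t)$ for a.e. $t\in[0,T]$ and all $u\in\mathbb{R}$. Consider, for $\bar u\in\mathbb{R}$ and $\lambda\in[0,1]$, the problem of finding $\tilde u\in\tilde{\mathfrak{D}}$ with $$(\phi(\tilde u'))'+f(\bar u+\tilde u)\tilde u'+\lambda g(t,\bar u+\tilde u)-\frac{\lambda}{T}\int_0^Tg(\xi,\bar u+\tilde u(\xi))\,d\xi=0\quad\text{a.e.}\qquad(\dagger_\lambda)$$ (a solution pair is $(\bar u,\tilde u)$). Then: (i) there exists $K=K(\phi,\rho)>0$ such that every solution pair $(\bar u,\tilde u)$ of $(\dagger_\lambda)$, $\lambda\in[0,1]$, satisfies $\|\tilde u'\|_{L^1}\le K$ and $\|\tilde u\|_\infty\le K$; (ii) for every $M>0$ there exists $M'=M'(\phi,f,\rho)>0$ such that every solution pair $(\bar u,\tilde u)$ of $(\dagger_1)$ with $|\bar u|\le M$ satisfies $\|\tilde u\|_{\mathcal{C}^1}\le M'$.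
   Context: $\mathfrak{D}=\{u\in\mathcal{C}^1([0,T]):u(0)=u(T),\,u'(0)=u'(T),\ \phi(u')\text{ absolutely continuous}\}$ and $\tilde{\mathfrak{D}}=\{u\in\mathfrak{D}:\int_0^Tu(t)\,dt=0\}$. $\|u\|_{\mathcal{C}^1}=\|u\|_\infty+\|u'\|_\infty$. A Carathéodory function is measurable in $t$, continuous in $u$, and locally $L^1$-bounded in $u$. $\mathbb{R}^+$ denotes the nonnegative reals. *)

theory Defs
  imports "HOL-Analysis.Analysis"
begin

definition abs_continuous_on :: "real set \<Rightarrow> (real \<Rightarrow> real) \<Rightarrow> bool" where
  "abs_continuous_on S h \<longleftrightarrow>
     (\<forall>e>0. \<exists>d>0. \<forall>(n::nat) (a::nat \<Rightarrow> real) b.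
        (\<forall>i<n. a i \<le> b i \<and> {a i..b i} \<subseteq> S) \<and>
        (\<forall>i<n. \<forall>j<n. i \<noteq> j \<longrightarrow> b i \<le> a j \<or> b j \<le> a i) \<and>
        (\<Sum>i<n. b i - a i) < d
        \<longrightarrow> (\<Sum>i<n. \<bar>h (b i) - h (a i)\<bar>) < e)"

definition incr_homeo :: "(real \<Rightarrow> real) \<Rightarrow> bool" where
  "incr_homeo \<phi> \<longleftrightarrow> strict_mono \<phi> \<and> (\<exists>\<psi>. homeomorphism UNIV UNIV \<phi> \<psi>)"

definition caratheodory :: "real \<Rightarrow> (real \<Rightarrow> real \<Rightarrow> real) \<Rightarrow> bool" where
  "caratheodory T g \<longleftrightarrow>
     (\<forall>u. (\<lambda>t. g t u) \<in> borel_measurable (lebesgue_on {0..T})) \<and>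
     (AE t in lebesgue_on {0..T}. continuous_on UNIV (g t)) \<and>
     (\<forall>r>0. \<exists>h. integrable (lebesgue_on {0..T}) h \<and>
        (AE t in lebesgue_on {0..T}. \<forall>u. \<bar>u\<bar> \<le> r \<longrightarrow> \<bar>g t u\<bar> \<le> h t))"

definition in_D :: "real \<Rightarrow> (real \<Rightarrow> real) \<Rightarrow> (real \<Rightarrow> real) \<Rightarrow> (real \<Rightarrow> real) \<Rightarrow> bool" where
  "in_D T \<phi> u u' \<longleftrightarrow>
     (\<forall>t\<in>{0..T}. (u has_real_derivative u' t) (at t within {0..T})) \<and>
     continuous_on {0..T} u' \<and>
     u 0 = u T \<and> u' 0 = u' T \<and>
     abs_continuous_on {0..T} (\<lambda>t. \<phi> (u' t))"

definition in_Dt :: "real \<Rightarrow> (real \<Rightarrow> real) \<Rightarrow> (real \<Rightarrow> real) \<Rightarrow> (real \<Rightarrow> real) \<Rightarrow> bool" where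
  "in_Dt T \<phi> u u' \<longleftrightarrow> in_D T \<phi> u u' \<and> integral {0..T} u = 0"

definition dagger_sol ::
  "real \<Rightarrow> (real \<Rightarrow> real) \<Rightarrow> (real \<Rightarrow> real) \<Rightarrow> (real \<Rightarrow> real \<Rightarrow> real) \<Rightarrow> real
   \<Rightarrow> real \<Rightarrow> (real \<Rightarrow> real) \<Rightarrow> (real \<Rightarrow> real) \<Rightarrow> bool" where
  "dagger_sol T \<phi> f g lam ub u u' \<longleftrightarrow>
     in_Dt T \<phi> u u' \<and>
     (AE t in lebesgue_on {0..T}.
        \<exists>w. ((\<lambda>s. \<phi> (u' s)) has_real_derivative w) (at t within {0..T}) \<and>
            w + f (ub + u t) * u' t + lam * g t (ub + u t)
              - lam / T * integral {0..T} (\<lambda>\<xi>. g \<xi> (ub + u \<xi>)) = 0)"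

end

theory Submission
  imports Defs
begin


definition nonov :: "real set \<Rightarrow> nat \<Rightarrow> (nat \<Rightarrow> real) \<Rightarrow> (nat \<Rightarrow> real) \<Rightarrow> bool" where
  "nonov S n a b \<longleftrightarrow> (\<forall>i<n. a i \<le> b i \<and> {a i..b i} \<subseteq> S) \<and>
        (\<forall>i<n. \<forall>j<n. i \<noteq> j \<longrightarrow> b i \<le> a j \<or> b j \<le> a i)"

lemma ac_iff: "abs_continuous_on S h \<longleftrightarrow>
   (\<forall>e>0. \<exists>d>0. \<forall>n a b. nonov S n a b \<and> (\<Sum>i<n. b i - a i) < d \<longrightarrow> (\<Sum>i<n. \<bar>h (b i) - h (a i)\<bar>) < e)"
  unfolding abs_continuous_on_def nonov_def by (simp add: conj_assoc)

lemma ac_add: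
  assumes "abs_continuous_on S f" "abs_continuous_on S g"
  shows "abs_continuous_on S (\<lambda>t. f t + g t)"
  unfolding ac_iff
proof (intro allI impI)
  fix e :: real assume e: "e > 0"
  then have e2: "e/2 > 0" by simp
  obtain d1 where d1: "d1 > 0" and H1: "\<forall>n a b. nonov S n a b \<and> (\<Sum>i<n. b i - a i) < d1 \<longrightarrow> (\<Sum>i<n. \<bar>f (b i) - f (a i)\<bar>) < e/2"
    using assms(1)[unfolded ac_iff, rule_format, OF e2] by blast
  obtain d2 where d2: "d2 > 0" and H2: "\<forall>n a b. nonov S n a b \<and> (\<Sum>i<n. b i - a i) < d2 \<longrightarrow> (\<Sum>i<n. \<bar>g (b i) - g (a i)\<bar>) < e/2"
    using assms(2)[unfolded ac_iff, rule_format, OF e2] by blast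
  show "\<exists>d>0. \<forall>n a b. nonov S n a b \<and> (\<Sum>i<n. b i - a i) < d \<longrightarrow> (\<Sum>i<n. \<bar>f (b i) + g (b i) - (f (a i) + g (a i))\<bar>) < e"
  proof (intro exI[of _ "min d1 d2"] conjI allI impI)
    fix n a b assume c: "nonov S n a b \<and> (\<Sum>i<n. b i - a i) < min d1 d2"
    have "(\<Sum>i<n. \<bar>f (b i) + g (b i) - (f (a i) + g (a i))\<bar>) \<le> (\<Sum>i<n. \<bar>f (b i) - f (a i)\<bar> + \<bar>g (b i) - g (a i)\<bar>)"
      by (rule sum_mono) linarith
    also have "\<dots> = (\<Sum>i<n. \<bar>f (b i) - f (a i)\<bar>) + (\<Sum>i<n. \<bar>g (b i) - g (a i)\<bar>)"
      by (rule sum.distrib)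
    also have "\<dots> < e/2 + e/2"
      using H1[rule_format, of n a b] H2[rule_format, of n a b] c by (intro add_strict_mono) auto
    finally show "(\<Sum>i<n. \<bar>f (b i) + g (b i) - (f (a i) + g (a i))\<bar>) < e" by simp
  qed (use d1 d2 in auto)
qed

lemma ac_lipschitz:
  assumes L: "\<And>x y. x \<in> S \<Longrightarrow> y \<in> S \<Longrightarrow> \<bar>w x - w y\<bar> \<le> L * \<bar>x - y\<bar>"
  shows "abs_continuous_on S w"
  unfolding ac_iff
proof (intro allI impI)
  fix e :: real assume e: "e > 0"
  show "\<exists>d>0. \<forall>n a b. nonov S n a b \<and> (\<Sum>i<n. b i - a i) < d \<longrightarrow> (\<Sum>i<n. \<bar>w (b i) - w (a i)\<bar>) < e"
  proof (intro exI[of _ "e / (\<bar>L\<bar> + 1)"] conjI allI impI)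
    show "e / (\<bar>L\<bar> + 1) > 0" using e by (simp add: add_pos_nonneg)
    fix n a b assume c: "nonov S n a b \<and> (\<Sum>i<n. b i - a i) < e / (\<bar>L\<bar> + 1)"
    have ab0: "a i \<le> b i \<and> {a i..b i} \<subseteq> S" if "i < n" for i
      using c that unfolding nonov_def by blast
    have ab: "a i \<in> S" "b i \<in> S" "a i \<le> b i" if "i < n" for i
      using ab0[OF that] by auto
    have "(\<Sum>i<n. \<bar>w (b i) - w (a i)\<bar>) \<le> (\<Sum>i<n. (\<bar>L\<bar> + 1) * (b i - a i))"
    proof (rule sum_mono)
      fix i assume "i \<in> {..<n}"
      then have i: "i < n" by simp
      have "\<bar>w (b i) - w (a i)\<bar> \<le> L * \<bar>b i - a i\<bar>" using L ab[OF i] by blast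
      also have "\<dots> \<le> (\<bar>L\<bar> + 1) * (b i - a i)"
        using ab(3)[OF i] by (simp add: mult_right_mono)
      finally show "\<bar>w (b i) - w (a i)\<bar> \<le> (\<bar>L\<bar> + 1) * (b i - a i)" .
    qed
    also have "\<dots> = (\<bar>L\<bar> + 1) * (\<Sum>i<n. b i - a i)" by (simp add: sum_distrib_left)
    also have "\<dots> < (\<bar>L\<bar> + 1) * (e / (\<bar>L\<bar> + 1))"
      using c by (intro mult_strict_left_mono) (auto simp: add_pos_nonneg)
    also have "\<dots> = e" by (simp add: add_pos_nonneg)
    finally show "(\<Sum>i<n. \<bar>w (b i) - w (a i)\<bar>) < e" .
  qed
qed



lemma ac_cont:
  assumes "abs_continuous_on {a..b} z"
  shows "continuous_on {a..b} z"
  unfolding continuous_on_iff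
proof (intro ballI allI impI)
  fix x e :: real assume x: "x \<in> {a..b}" and e: "0 < e"
  obtain d where d: "d > 0" and H: "\<And>(n::nat) (a'::nat \<Rightarrow> real) b'.
        (\<forall>i<n. a' i \<le> b' i \<and> {a' i..b' i} \<subseteq> {a..b}) \<and>
        (\<forall>i<n. \<forall>j<n. i \<noteq> j \<longrightarrow> b' i \<le> a' j \<or> b' j \<le> a' i) \<and>
        (\<Sum>i<n. b' i - a' i) < d
        \<Longrightarrow> (\<Sum>i<n. \<bar>z (b' i) - z (a' i)\<bar>) < e"
    using assms e unfolding abs_continuous_on_def by blast
  show "\<exists>d>0. \<forall>x'\<in>{a..b}. dist x' x < d \<longrightarrow> dist (z x') (z x) < e"
  proof (intro exI conjI ballI impI)
    fix y assume y: "y \<in> {a..b}" "dist y x < d"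
    have "\<bar>z (max x y) - z (min x y)\<bar> < e"
    proof -
      have "max x y - min x y < d" using y by (auto simp: dist_real_def)
      then show ?thesis using H[of 1 "\<lambda>_. min x y" "\<lambda>_. max x y"] x y by auto
    qed
    then show "dist (z y) (z x) < e"
      by (auto simp: dist_real_def max_def min_def abs_minus_commute split: if_splits)
  qed (rule d)
qed

lemma ac_negligible_image:
  fixes z :: "real \<Rightarrow> real"
  assumes ac: "abs_continuous_on {a..b} z" and N: "negligible N" "N \<subseteq> {a..b}"
  shows "negligible (z ` N)"
proof (cases "a < b")
  case False
  then have "N \<subseteq> {a}" using N(2) by auto
  then have "z ` N \<subseteq> {z a}" by auto
  then show ?thesis using negligible_subset negligible_sing by metis
next
  case True
  have cont: "continuous_on {a..b} z" by (rule ac_cont[OF ac])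
  show ?thesis unfolding negligible_outer_le
  proof (intro allI impI)
    fix e :: real assume e: "e > 0"
    obtain d where d: "d > 0" and H: "\<forall>n a' b'. nonov {a..b} n a' b' \<and> (\<Sum>i<n. b' i - a' i) < d \<longrightarrow> (\<Sum>i<n. \<bar>z (b' i) - z (a' i)\<bar>) < e"
      using ac[unfolded ac_iff, rule_format, OF e] by blast
    have Nm: "N \<in> lmeasurable" using N(1) negligible_imp_measurable by blast
    have Nsub: "N \<subseteq> cbox a b" using N(2) by simp
    have d2: "d/2 > 0" using d by simp
    obtain \<D> where Dc: "countable \<D>" and DK: "\<And>K. K\<in>\<D> \<Longrightarrow> K \<subseteq> cbox a b \<and> K \<noteq> {} \<and> (\<exists>c d. K = cbox c d)"
      and Dp: "pairwise (\<lambda>A B. interior A \<inter> interior B = {}) \<D>"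
      and "\<And>u v. cbox u v \<in> \<D> \<Longrightarrow> \<exists>n. \<forall>i \<in> Basis. v \<bullet> i - u \<bullet> i = (b \<bullet> i - a \<bullet> i)/2^n"
      and Di: "\<And>K. K\<in>\<D> \<Longrightarrow> box a b \<noteq> {} \<Longrightarrow> interior K \<noteq> {}"
      and Dcov: "N \<subseteq> \<Union>\<D>" and Dm: "\<Union>\<D> \<in> lmeasurable"
      and Dmeas: "measure lebesgue (\<Union>\<D>) \<le> measure lebesgue N + d/2"
      by (rule measurable_outer_intervals_bounded[OF Nm Nsub d2]) (rule that; assumption)
    have mN: "measure lebesgue N = 0" using N(1) negligible_imp_measure0 by blast
    have bab: "box a b \<noteq> {}" using True by simp
    have Kint: "K = {Inf K..Sup K} \<and> Inf K < Sup K \<and> K \<subseteq> {a..b}" if K: "K \<in> \<D>" for K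
    proof -
      obtain c d' where Kc: "K = cbox c d'" using DK[OF K] by blast
      have "interior K \<noteq> {}" using Di[OF K bab] .
      then have "c < d'" using Kc by auto
      then show ?thesis using Kc DK[OF K] by auto
    qed
    have Kint2: "interior K = {Inf K<..<Sup K}" if K: "K \<in> \<D>" for K
      using Kint[OF K] by (metis interior_atLeastAtMost_real)
    have Kcomp: "compact K" "K \<noteq> {}" "continuous_on K z" if K: "K \<in> \<D>" for K
    proof -
      show "compact K" using Kint[OF K] by (metis compact_Icc)
      show "K \<noteq> {}" using Kint[OF K] by auto
      show "continuous_on K z" using cont Kint[OF K] continuous_on_subset by blast
    qed
    have "\<forall>K\<in>\<D>. \<exists>p\<in>K. \<forall>y\<in>K. z p \<le> z y"
      using Kcomp continuous_attains_inf by blast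
    then obtain P where P: "\<forall>K\<in>\<D>. P K \<in> K \<and> (\<forall>y\<in>K. z (P K) \<le> z y)" by metis
    have "\<forall>K\<in>\<D>. \<exists>p\<in>K. \<forall>y\<in>K. z y \<le> z p"
      using Kcomp continuous_attains_sup by blast
    then obtain Q where Q: "\<forall>K\<in>\<D>. Q K \<in> K \<and> (\<forall>y\<in>K. z y \<le> z (Q K))" by metis
    have zK: "z ` K \<subseteq> {z (P K)..z (Q K)}" if K: "K\<in>\<D>" for K using P Q K by auto
    have zKm: "z ` K \<in> lmeasurable" if K: "K\<in>\<D>" for K
      using Kcomp[OF K] by (intro lmeasurable_compact compact_continuous_image)
    have Dlm: "K \<in> lmeasurable" if K: "K\<in>\<D>" for K
      using Kcomp[OF K] by (intro lmeasurable_compact)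
    have bound: "measure lebesgue (\<Union>K\<in>\<D>'. z ` K) \<le> e" if D': "\<D>' \<subseteq> \<D>" "finite \<D>'" for \<D>'
    proof -
      define m where "m = card \<D>'"
      obtain h where h: "bij_betw h {0..<m} \<D>'" using ex_bij_betw_nat_finite[OF D'(2)] unfolding m_def by blast
      define a' where "a' i = min (P (h i)) (Q (h i))" for i
      define b' where "b' i = max (P (h i)) (Q (h i))" for i
      have hD: "h i \<in> \<D>" if "i < m" for i using h D'(1) that unfolding bij_betw_def by auto
      have hinj: "h i \<noteq> h j" if "i<m" "j<m" "i\<noteq>j" for i j
        using h that unfolding bij_betw_def inj_on_def by auto
      have ab_in: "a' i \<in> h i \<and> b' i \<in> h i \<and> a' i \<le> b' i" if "i<m" for i
        using P Q hD[OF that] unfolding a'_def b'_def by (auto simp: min_def max_def)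
      have mem: "Inf (h i) \<le> a' i \<and> a' i \<le> b' i \<and> b' i \<le> Sup (h i)" if "i<m" for i
      proof -
        have "a' i \<in> {Inf (h i)..Sup (h i)}" "b' i \<in> {Inf (h i)..Sup (h i)}"
          using ab_in[OF that] Kint[OF hD[OF that]] by auto
        then show ?thesis using ab_in[OF that] by auto
      qed
      have nono: "nonov {a..b} m a' b'"
      proof -
        have "a' i \<le> b' i \<and> {a' i..b' i} \<subseteq> {a..b}" if "i<m" for i
        proof -
          have "{a' i..b' i} \<subseteq> {Inf (h i)..Sup (h i)}" using mem[OF that] by auto
          also have "\<dots> \<subseteq> {a..b}" using Kint[OF hD[OF that]] by auto
          finally show ?thesis using mem[OF that] by auto
        qed
        moreover have "b' i \<le> a' j \<or> b' j \<le> a' i" if ij: "i<m" "j<m" "i\<noteq>j" for i j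
        proof -
          have disj: "interior (h i) \<inter> interior (h j) = {}"
            using Dp hD[OF ij(1)] hD[OF ij(2)] hinj[OF ij] unfolding pairwise_def by blast
          have "Sup (h i) \<le> Inf (h j) \<or> Sup (h j) \<le> Inf (h i)"
          proof (rule ccontr)
            assume nc: "\<not> (Sup (h i) \<le> Inf (h j) \<or> Sup (h j) \<le> Inf (h i))"
            define x where "x = (max (Inf (h i)) (Inf (h j)) + min (Sup (h i)) (Sup (h j)))/2"
            have "x \<in> interior (h i) \<inter> interior (h j)"
              using Kint[OF hD[OF ij(1)]] Kint[OF hD[OF ij(2)]] nc
              unfolding Kint2[OF hD[OF ij(1)]] Kint2[OF hD[OF ij(2)]] x_def by auto
            with disj show False by blast
          qed
          then show ?thesis using mem[OF ij(1)] mem[OF ij(2)] by linarith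
        qed
        ultimately show ?thesis unfolding nonov_def by blast
      qed
      have D'm: "\<And>K. K \<in> \<D>' \<Longrightarrow> K \<in> lmeasurable" using Dlm D'(1) by blast
      have D'neg: "pairwise (\<lambda>S T. negligible (S \<inter> T)) \<D>'"
        unfolding pairwise_def
      proof (intro ballI impI)
        fix S T assume ST: "S \<in> \<D>'" "T \<in> \<D>'" "S \<noteq> T"
        then have "interior S \<inter> interior T = {}" using Dp D'(1) unfolding pairwise_def by blast
        then have "interior (S \<inter> T) = {}" by simp
        moreover have "convex (S \<inter> T)"
          using Kint[of S] Kint[of T] ST D'(1) by (metis convex_Int convex_real_interval(5) subsetD)
        ultimately show "negligible (S \<inter> T)" using negligible_convex_interior by blast
      qed
      have lens: "(\<Sum>i<m. b' i - a' i) < d"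
      proof -
        have "(\<Sum>i<m. b' i - a' i) \<le> (\<Sum>i<m. measure lebesgue (h i))"
        proof (rule sum_mono)
          fix i assume "i \<in> {..<m}"
          then have i: "i < m" by simp
          have "measure lebesgue (h i) = Sup (h i) - Inf (h i)"
            using Kint[OF hD[OF i]] by (metis less_imp_le measure_completion measure_lborel_Icc sets_lborel atLeastAtMost_borel)
          then show "b' i - a' i \<le> measure lebesgue (h i)" using mem[OF i] by linarith
        qed
        also have "\<dots> = (\<Sum>K\<in>\<D>'. measure lebesgue K)"
          using sum.reindex_bij_betw[OF h, of "\<lambda>K. measure lebesgue K"] by (simp add: lessThan_atLeast0)
        also have "\<dots> = measure lebesgue (\<Union>\<D>')"
          by (rule measure_negligible_finite_Union[symmetric, OF D'(2) D'm D'neg])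
        also have "\<dots> \<le> measure lebesgue (\<Union>\<D>)"
        proof (rule measure_mono_fmeasurable)
          show "\<Union>\<D>' \<subseteq> \<Union>\<D>" using D'(1) by auto
          show "\<Union>\<D>' \<in> sets lebesgue" using D'm D'(2) by (intro sets.finite_Union) (auto dest: fmeasurableD)
          show "\<Union>\<D> \<in> fmeasurable lebesgue" using Dm .
        qed
        also have "\<dots> \<le> d/2" using Dmeas mN by simp
        finally show ?thesis using d by linarith
      qed
      have sumlt: "(\<Sum>i<m. \<bar>z (b' i) - z (a' i)\<bar>) < e" using H nono lens by blast
      have "measure lebesgue (\<Union>K\<in>\<D>'. z ` K) \<le> (\<Sum>K\<in>\<D>'. measure lebesgue (z ` K))"
        by (rule measure_UNION_le[OF D'(2)]) (use zKm D'(1) in \<open>auto dest: fmeasurableD\<close>)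
      also have "\<dots> \<le> (\<Sum>K\<in>\<D>'. z (Q K) - z (P K))"
      proof (rule sum_mono)
        fix K assume K: "K \<in> \<D>'"
        then have KD: "K \<in> \<D>" using D'(1) by blast
        have "z (P K) \<le> z (Q K)" using P Q KD by blast
        then have "measure lebesgue {z (P K)..z (Q K)} = z (Q K) - z (P K)" by simp
        moreover have "measure lebesgue (z ` K) \<le> measure lebesgue {z (P K)..z (Q K)}"
          by (rule measure_mono_fmeasurable[OF zK[OF KD]]) (use zKm[OF KD] in \<open>auto dest: fmeasurableD\<close>)
        ultimately show "measure lebesgue (z ` K) \<le> z (Q K) - z (P K)" by linarith
      qed
      also have "\<dots> = (\<Sum>i<m. z (Q (h i)) - z (P (h i)))"
        using sum.reindex_bij_betw[OF h, of "\<lambda>K. z (Q K) - z (P K)"] by (simp add: lessThan_atLeast0)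
      also have "\<dots> = (\<Sum>i<m. \<bar>z (b' i) - z (a' i)\<bar>)"
      proof (rule sum.cong[OF refl])
        fix i assume "i \<in> {..<m}"
        then have i: "i < m" by simp
        have "z (P (h i)) \<le> z (Q (h i))" using P Q hD[OF i] by blast
        then show "z (Q (h i)) - z (P (h i)) = \<bar>z (b' i) - z (a' i)\<bar>"
          unfolding a'_def b'_def by (auto simp: min_def max_def)
      qed
      finally show ?thesis using sumlt by linarith
    qed
    have meas1: "(\<Union>K\<in>\<D>. z ` K) \<in> lmeasurable"
      by (rule fmeasurable_UN_bound[OF Dc zKm bound])
    have meas2: "measure lebesgue (\<Union>K\<in>\<D>. z ` K) \<le> e"
      by (rule measure_UN_bound[OF Dc zKm bound])
    have "z ` N \<subseteq> (\<Union>K\<in>\<D>. z ` K)" using Dcov by auto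
    then show "\<exists>T. z ` N \<subseteq> T \<and> T \<in> lmeasurable \<and> measure lebesgue T \<le> e" using meas1 meas2 by blast
  qed
qed



lemma vec_measure_transfer:
  fixes A :: "real set"
  assumes "vec ` A \<in> (lmeasurable :: (real^1) set set)"
  shows "A \<in> lmeasurable \<and> measure lebesgue A = measure lebesgue (vec ` A :: (real^1) set)"
proof -
  let ?m = "measure lebesgue (vec ` A :: (real^1) set)"
  have "((\<lambda>x::real^1. 1::real) has_integral ?m) (vec ` A)"
    using assms lmeasure_integral lmeasurable_iff_integrable_on has_integral_iff by metis
  then have "(((\<lambda>x::real^1. 1::real) \<circ> vec) has_integral ?m) ((\<lambda>x. x $ 1) ` (vec ` A :: (real^1) set))"
    by (rule has_integral_vec1_I)
  moreover have "(\<lambda>x. x $ 1) ` (vec ` A :: (real^1) set) = A" by (auto simp: image_image)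
  ultimately have "((\<lambda>x::real. 1::real) has_integral ?m) A" by (simp add: o_def)
  then show ?thesis
    using lmeasurable_iff_integrable_on lmeasure_integral has_integral_iff by metis
qed

lemma measure_deriv_image_le:
  fixes z z' k :: "real \<Rightarrow> real"
  assumes S: "S \<in> sets lebesgue"
   and d: "\<And>x. x\<in>S \<Longrightarrow> (z has_real_derivative z' x) (at x within S)"
   and k: "k integrable_on S" and b: "\<And>x. x\<in>S \<Longrightarrow> \<bar>z' x\<bar> \<le> k x"
  shows "z ` S \<in> lmeasurable \<and> measure lebesgue (z ` S) \<le> integral S k"
proof -
  let ?lift = "vec :: real \<Rightarrow> real^1"
  let ?drop = "(\<lambda>x::real^1. x $ 1)"
  define S' where "S' = ?lift ` S"
  define f where "f = (\<lambda>x::real^1. vec (z (x $ 1)) :: real^1)"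
  define f' where "f' = (\<lambda>x::real^1. (\<lambda>v::real^1. z' (x$1) *\<^sub>R v))"
  have S': "S' \<in> sets lebesgue"
    unfolding S'_def by (auto intro: differentiable_image_in_sets_lebesgue [OF S] differentiable_vec)
  have der0: "((\<lambda>x. vec (z (x $ 1))) has_derivative (*\<^sub>R) (z' t)) (at (vec t) within ?lift ` S)"
    if "t \<in> S" for t
  proof (rule has_derivative_vector_1)
    have e: "(\<lambda>x. x * z' t) = (*) (z' t)" by (auto simp: fun_eq_iff)
    show "(z has_derivative (\<lambda>x. x * z' t)) (at t within S)"
      using d [OF that] unfolding has_field_derivative_def e .
  qed
  have der: "(f has_derivative f' x) (at x within S')" if xS: "x \<in> S'" for x
  proof -
    obtain t where t: "t \<in> S" "x = vec t" using xS unfolding S'_def by auto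
    have "f' x = (*\<^sub>R) (z' t)" using t unfolding f'_def by (auto simp: fun_eq_iff)
    then show ?thesis using der0[OF t(1)] t unfolding f_def S'_def by simp
  qed
  have detf: "det (matrix (f' x)) = z' (x $ 1)" for x
    unfolding f'_def by (simp add: matrix_scaleR det_1 mat_def)
  have meas: "(\<lambda>x. \<bar>det (matrix (f' x))\<bar>) \<in> borel_measurable (lebesgue_on S')"
    using borel_measurable_det_Jacobian[OF S' der] by (intro borel_measurable_abs) 
  have kS: "(k has_integral integral S k) S" using k by (simp add: has_integral_iff)
  have "((k \<circ> ?drop) has_integral integral S k) S'"
  proof (rule has_integral_vec1_D)
    have "(k \<circ> ?drop) \<circ> vec = k" by (auto simp: fun_eq_iff)
    moreover have "?drop ` S' = S" unfolding S'_def by (auto simp: image_image)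
    ultimately show "((k \<circ> ?drop) \<circ> vec has_integral integral S k) (?drop ` S')" using kS by simp
  qed
  then have kS': "(k \<circ> ?drop) integrable_on S'" and kS'i: "integral S' (k \<circ> ?drop) = integral S k"
    by (auto simp: has_integral_iff)
  have bnd: "norm (\<bar>det (matrix (f' x))\<bar>) \<le> (k \<circ> ?drop) x" if xS: "x \<in> S'" for x
  proof -
    obtain t where t: "t \<in> S" "x = vec t" using xS unfolding S'_def by auto
    then show ?thesis using b[OF t(1)] detf[of x] by simp
  qed
  have int: "(\<lambda>x. \<bar>det (matrix (f' x))\<bar>) integrable_on S'"
    by (rule measurable_bounded_by_integrable_imp_integrable[OF meas kS' bnd S'])
  have im: "f ` S' \<in> lmeasurable" and imm: "measure lebesgue (f ` S') \<le> integral S' (\<lambda>x. \<bar>det (matrix (f' x))\<bar>)"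
    using measurable_differentiable_image[OF S' der int] measure_differentiable_image[OF S' der int] by auto
  have "integral S' (\<lambda>x. \<bar>det (matrix (f' x))\<bar>) \<le> integral S' (k \<circ> ?drop)"
    by (rule integral_le[OF int kS']) (use bnd in auto)
  have fS: "f ` S' = ?lift ` (z ` S)" unfolding f_def S'_def by (auto simp: image_image)
  show ?thesis
    using vec_measure_transfer[of "z ` S"] im imm fS \<open>integral S' _ \<le> _\<close> kS'i by auto
qed



lemma ac_diff_bound:
  fixes z z' k :: "real \<Rightarrow> real"
  assumes ac: "abs_continuous_on {a..b} z" and N: "negligible N"
    and d: "\<And>x. x \<in> {a..b} - N \<Longrightarrow> (z has_real_derivative z' x) (at x within {a..b})"
    and k: "k integrable_on {a..b}" and bd: "\<And>x. x \<in> {a..b} - N \<Longrightarrow> \<bar>z' x\<bar> \<le> k x"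
    and st: "s \<in> {a..b}" "t \<in> {a..b}"
  shows "\<bar>z t - z s\<bar> \<le> integral {a..b} k"
proof -
  define S where "S = {a..b} - N"
  have S: "S \<in> sets lebesgue" unfolding S_def using negligible_imp_sets[OF N] by auto
  have dS: "(z has_real_derivative z' x) (at x within S)" if "x \<in> S" for x
    using d[of x] that unfolding S_def by (auto intro: has_field_derivative_subset)
  have neg1: "negligible {x \<in> {a..b} - S. k x \<noteq> 0}"
    by (rule negligible_subset[OF N]) (auto simp: S_def)
  have neg2: "negligible {x \<in> S - {a..b}. k x \<noteq> 0}" by (simp add: S_def cong: conj_cong)
  have "(k has_integral integral {a..b} k) {a..b}" using k by (simp add: has_integral_iff)
  then have "(k has_integral integral {a..b} k) S" using has_integral_spike_set_eq[OF neg1 neg2] by blast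
  then have kS: "k integrable_on S" and kSi: "integral S k = integral {a..b} k" by (auto simp: has_integral_iff)
  have zS: "z ` S \<in> lmeasurable" and zSm: "measure lebesgue (z ` S) \<le> integral {a..b} k"
    using measure_deriv_image_le[OF S dS kS] bd kSi unfolding S_def by auto
  have zN: "negligible (z ` ({a..b} \<inter> N))"
    by (rule ac_negligible_image[OF ac]) (use negligible_subset[OF N] in auto)
  have cont: "continuous_on {a..b} z" by (rule ac_cont[OF ac])
  have conn: "connected (z ` {a..b})" by (rule connected_continuous_image[OF cont]) auto
  then have iv: "is_interval (z ` {a..b})" by (simp add: is_interval_connected_1)
  have I: "{min (z s) (z t)..max (z s) (z t)} \<subseteq> z ` {a..b}"
  proof
    fix y assume "y \<in> {min (z s) (z t)..max (z s) (z t)}"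
    then have "min (z s) (z t) \<le> y" "y \<le> max (z s) (z t)" by auto
    moreover have "min (z s) (z t) \<in> z ` {a..b}" "max (z s) (z t) \<in> z ` {a..b}"
      using st by (auto simp: min_def max_def)
    ultimately show "y \<in> z ` {a..b}" using iv unfolding is_interval_1 by blast
  qed
  have sub: "z ` {a..b} \<subseteq> z ` S \<union> z ` ({a..b} \<inter> N)" unfolding S_def by auto
  have zNm: "z ` ({a..b} \<inter> N) \<in> lmeasurable" "measure lebesgue (z ` ({a..b} \<inter> N)) = 0"
    using zN negligible_imp_measurable negligible_imp_measure0 by auto
  have Um: "z ` S \<union> z ` ({a..b} \<inter> N) \<in> lmeasurable" using zS zNm by (intro fmeasurable.Un) auto
  have "\<bar>z t - z s\<bar> = measure lebesgue {min (z s) (z t)..max (z s) (z t)}"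
    by (simp add: min_def max_def abs_if)
  also have "\<dots> \<le> measure lebesgue (z ` S \<union> z ` ({a..b} \<inter> N))"
    by (rule measure_mono_fmeasurable) (use I sub Um in auto)
  also have "\<dots> \<le> measure lebesgue (z ` S) + measure lebesgue (z ` ({a..b} \<inter> N))"
    by (rule measure_Un_le) (use zS zNm in \<open>auto dest: fmeasurableD\<close>)
  also have "\<dots> \<le> integral {a..b} k" using zSm zNm by simp
  finally show ?thesis .
qed



lemma first_drop:
  fixes u u' :: "real \<Rightarrow> real"
  assumes pq: "0 \<le> p" "p < q" "q \<le> T"
    and du: "\<forall>t\<in>{0..T}. (u has_real_derivative u' t) (at t within {0..T})"
    and up: "u p > x0" and uq: "u q \<le> x0"
  shows "\<exists>s\<in>{0..T}. u s = x0 \<and> u' s \<le> 0"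
proof -
  have contT: "continuous_on {0..T} u"
    using du by (meson DERIV_continuous continuous_on_eq_continuous_within)
  have cont: "continuous_on {p..q} u" by (rule continuous_on_subset[OF contT]) (use pq in auto)
  define A where "A = {r \<in> {p..q}. u r \<le> x0}"
  have Acl: "closed A" unfolding A_def
    by (rule continuous_on_closed_Collect_le[OF cont continuous_on_const]) auto
  have Ane: "A \<noteq> {}" using uq pq unfolding A_def by auto
  have Abd: "bdd_below A" unfolding A_def by (auto intro: bdd_belowI[of _ p])
  define s where "s = Inf A"
  have sA: "s \<in> A" unfolding s_def by (rule closed_contains_Inf[OF Ane Abd Acl])
  then have s: "p \<le> s" "s \<le> q" "u s \<le> x0" unfolding A_def by auto
  have below: "u r > x0" if "p \<le> r" "r < s" for r
  proof (rule ccontr)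
    assume "\<not> u r > x0"
    then have "r \<in> A" using that s unfolding A_def by auto
    then have "s \<le> r" unfolding s_def using Abd by (rule cInf_lower)
    with that show False by simp
  qed
  have ps: "p < s" using s up by (cases "p = s") auto
  obtain r where r: "p \<le> r" "r \<le> s" "u r = x0"
    using IVT2'[of u s x0 p] s up continuous_on_subset[OF cont, of "{p..s}"] by auto
  have "r = s" using below[of r] r by (cases "r < s") auto
  then have usx: "u s = x0" using r by simp
  have "u' s \<le> 0"
  proof (rule ccontr)
    assume "\<not> u' s \<le> 0"
    then have pos: "u' s > 0" by simp
    have sT: "s \<in> {0..T}" using s pq by auto
    obtain d where d: "d > 0" and D: "\<forall>h>0. s - h \<in> {0..T} \<longrightarrow> h < d \<longrightarrow> u (s - h) < u s"
      using has_real_derivative_pos_inc_left[OF du[rule_format, OF sT] pos] by blast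
    define h where "h = min (d/2) (s - p)"
    have h: "h > 0" "h < d" "h \<le> s - p" using d ps unfolding h_def by auto
    have "s - h \<in> {0..T}" using h s pq by auto
    then have "u (s - h) < x0" using D h usx by auto
    moreover have "u (s - h) > x0" using below[of "s - h"] h by auto
    ultimately show False by simp
  qed
  then show ?thesis using usx s pq by (intro bexI[of _ s]) auto
qed

lemma level_down_aux:
  fixes u u' :: "real \<Rightarrow> real"
  assumes T: "0 < T"
    and du: "\<forall>t\<in>{0..T}. (u has_real_derivative u' t) (at t within {0..T})"
    and per: "u 0 = u T"
    and t: "0 \<le> t" "t < T" "u' t > 0"
  shows "\<exists>s\<in>{0..T}. u s = u t \<and> u' s \<le> 0"
proof -
  have tT: "t \<in> {0..T}" using t by auto
  obtain d where d: "d > 0" and D: "\<forall>h>0. t + h \<in> {0..T} \<longrightarrow> h < d \<longrightarrow> u t < u (t + h)"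
    using has_real_derivative_pos_inc_right[OF du[rule_format, OF tT] t(3)] by blast
  define h where "h = min (d/2) (T - t)"
  have h: "h > 0" "h < d" "h \<le> T - t" using d t unfolding h_def by auto
  define t1 where "t1 = t + h"
  have t1: "t < t1" "t1 \<le> T" "u t1 > u t" using h D t unfolding t1_def by auto
  show ?thesis
  proof (cases "u T \<le> u t")
    case True
    have "t1 < T" using t1 True by (cases "t1 = T") auto
    then show ?thesis by (intro first_drop[of t1 T T u u' "u t"]) (use t1 t du True in auto)
  next
    case False
    then have u0: "u 0 > u t" using per by simp
    then have t0: "t > 0" using t by (cases "t = 0") auto
    obtain d' where d': "d' > 0" and D': "\<forall>h>0. t - h \<in> {0..T} \<longrightarrow> h < d' \<longrightarrow> u (t - h) < u t"
      using has_real_derivative_pos_inc_left[OF du[rule_format, OF tT] t(3)] by blast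
    define h' where "h' = min (d'/2) t"
    have h': "h' > 0" "h' < d'" "h' \<le> t" using d' t0 unfolding h'_def by auto
    have "t - h' \<in> {0..T}" using h' t by auto
    then have lt: "u (t - h') < u t" using D' h' by auto
    show ?thesis
    proof (cases "h' = t")
      case True
      then show ?thesis using lt u0 by simp
    next
      case False
      show ?thesis by (rule first_drop[of 0 "t - h'" T u u' "u t"]) (use h' False t du u0 lt in auto)
    qed
  qed
qed

lemma level_down:
  fixes u u' :: "real \<Rightarrow> real"
  assumes T: "0 < T"
    and du: "\<forall>t\<in>{0..T}. (u has_real_derivative u' t) (at t within {0..T})"
    and per: "u 0 = u T" "u' 0 = u' T"
    and t: "t \<in> {0..T}" "u' t > 0"
  shows "\<exists>s\<in>{0..T}. u s = u t \<and> u' s \<le> 0"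
proof (cases "t = T")
  case True
  then have "u' 0 > 0" using per t by simp
  then have "\<exists>s\<in>{0..T}. u s = u 0 \<and> u' s \<le> 0" using level_down_aux[OF T du per(1), of 0] T by auto
  then show ?thesis using True per by simp
next
  case False
  then show ?thesis using level_down_aux[OF T du per(1)] t by auto
qed

lemma level_up:
  fixes u u' :: "real \<Rightarrow> real"
  assumes T: "0 < T"
    and du: "\<forall>t\<in>{0..T}. (u has_real_derivative u' t) (at t within {0..T})"
    and per: "u 0 = u T" "u' 0 = u' T"
    and t: "t \<in> {0..T}" "u' t < 0"
  shows "\<exists>s\<in>{0..T}. u s = u t \<and> u' s \<ge> 0"
proof -
  have du': "\<forall>t\<in>{0..T}. ((\<lambda>x. - u x) has_real_derivative - u' t) (at t within {0..T})"
    using du by (auto intro: DERIV_minus)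
  obtain s where "s \<in> {0..T}" "- u s = - u t" "- u' s \<le> 0"
    using level_down[OF T du', of t] per t by auto
  then show ?thesis by auto
qed



lemma AE_negl:
  fixes a b :: real
  assumes "AE t in lebesgue_on {a..b}. Q t"
  obtains N where "negligible N" "\<And>t. t \<in> {a..b} - N \<Longrightarrow> Q t"
proof -
  obtain N where N: "\<And>x. x \<in> space (lebesgue_on {a..b}) - N \<Longrightarrow> Q x" "N \<in> null_sets (lebesgue_on {a..b})"
    using AE_E3[OF assms] by blast
  have ab: "{a..b} \<in> sets lebesgue" by (rule sets_completionI_sets) (simp add: borel_closed)
  have "N \<in> null_sets lebesgue" using N(2) null_sets_restrict_space[OF ab, of N] by auto
  then have "negligible N" by (simp add: negligible_iff_null_sets)
  then show ?thesis using N(1) that by auto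
qed

lemma core_phi_bound:
  fixes T :: real and \<phi> \<rho> f u u' :: "real \<Rightarrow> real" and g :: "real \<Rightarrow> real \<Rightarrow> real"
  assumes T: "T > 0" and phi: "strict_mono \<phi>" "\<phi> 0 = 0"
    and rho: "\<rho> integrable_on {0..T}" "\<forall>t\<in>{0..T}. \<rho> t \<ge> 0"
    and f: "continuous_on UNIV f"
    and gb: "AE t in lebesgue_on {0..T}. \<forall>v. \<bar>g t v\<bar> \<le> \<rho> t"
    and lam: "lam \<in> {0..1}" and sol: "dagger_sol T \<phi> f g lam ub u u'"
    and t: "t \<in> {0..T}"
  shows "\<bar>\<phi> (u' t)\<bar> \<le> 2 * integral {0..T} \<rho>"
proof -
  define P where "P = integral {0..T} \<rho>"
  have P0: "P \<ge> 0" unfolding P_def using rho by (intro integral_nonneg) auto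
  define c where "c = integral {0..T} (\<lambda>\<xi>. g \<xi> (ub + u \<xi>))"
  from sol have du: "\<forall>t\<in>{0..T}. (u has_real_derivative u' t) (at t within {0..T})"
   and u'c: "continuous_on {0..T} u'" and per: "u 0 = u T" "u' 0 = u' T"
   and acphi: "abs_continuous_on {0..T} (\<lambda>t. \<phi> (u' t))"
   and ae: "AE t in lebesgue_on {0..T}. \<exists>w. ((\<lambda>s. \<phi> (u' s)) has_real_derivative w) (at t within {0..T}) \<and>
            w + f (ub + u t) * u' t + lam * g t (ub + u t) - lam / T * c = 0"
    unfolding dagger_sol_def in_Dt_def in_D_def c_def by auto
  obtain N1 where N1: "negligible N1" "\<And>t. t \<in> {0..T} - N1 \<Longrightarrow> \<forall>v. \<bar>g t v\<bar> \<le> \<rho> t"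
    using AE_negl[OF gb] by blast
  obtain N2 where N2: "negligible N2" "\<And>t. t \<in> {0..T} - N2 \<Longrightarrow> \<exists>w. ((\<lambda>s. \<phi> (u' s)) has_real_derivative w) (at t within {0..T}) \<and>
            w + f (ub + u t) * u' t + lam * g t (ub + u t) - lam / T * c = 0"
    using AE_negl[OF ae] by blast
  have cb: "\<bar>c\<bar> \<le> P"
  proof (cases "(\<lambda>\<xi>. g \<xi> (ub + u \<xi>)) integrable_on {0..T}")
    case True
    define G2 where "G2 \<xi> = (if \<xi> \<in> N1 then 0 else g \<xi> (ub + u \<xi>))" for \<xi>
    have e: "integral {0..T} (\<lambda>\<xi>. g \<xi> (ub + u \<xi>)) = integral {0..T} G2"
      by (rule integral_spike[OF N1(1)]) (auto simp: G2_def)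
    have i: "G2 integrable_on {0..T}"
      by (rule integrable_spike[OF True N1(1)]) (auto simp: G2_def)
    have "norm (integral {0..T} G2) \<le> integral {0..T} \<rho>"
    proof (rule integral_norm_bound_integral[OF i rho(1)])
      fix x assume x: "x \<in> {0..T}"
      show "norm (G2 x) \<le> \<rho> x" using N1(2)[of x] rho(2) x by (auto simp: G2_def)
    qed
    then show ?thesis by (simp add: c_def P_def e)
  next
    case False then have "c = 0" by (simp add: c_def not_integrable_integral)
    then show ?thesis using P0 by simp
  qed
  have uc: "continuous_on {0..T} u"
    using du by (meson DERIV_continuous continuous_on_eq_continuous_within)
  have "compact ((\<lambda>t. ub + u t) ` {0..T})"
    by (intro compact_continuous_image continuous_intros uc) auto
  then obtain Lb where Lb: "\<And>t. t\<in>{0..T} \<Longrightarrow> \<bar>ub + u t\<bar> \<le> Lb"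
    using compact_imp_bounded bounded_iff by (metis (no_types, lifting) image_eqI real_norm_def)
  define F where "F x = integral {-Lb..x} f" for x
  have fc: "continuous_on {-Lb..Lb} f" using f continuous_on_subset by blast
  have dF: "(F has_real_derivative f y) (at y within {-Lb..Lb})" if "y \<in> {-Lb..Lb}" for y
    unfolding F_def by (rule integral_has_real_derivative[OF fc that])
  define H where "H t = F (ub + u t)" for t
  have sub: "(\<lambda>t. ub + u t) ` {0..T} \<subseteq> {-Lb..Lb}" using Lb by (force simp: abs_le_iff)
  have dH: "(H has_real_derivative f (ub + u t) * u' t) (at t within {0..T})" if tt: "t\<in>{0..T}" for t
  proof -
    have g': "((\<lambda>t. ub + u t) has_real_derivative u' t) (at t within {0..T})"
      using du tt by (auto intro!: derivative_eq_intros)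
    have "ub + u t \<in> {-Lb..Lb}" using sub tt unfolding image_subset_iff by blast
    then have "(F has_real_derivative f (ub + u t)) (at (ub + u t) within (\<lambda>t. ub + u t) ` {0..T})"
      using has_field_derivative_subset[OF dF sub] by blast
    from DERIV_image_chain[OF this g'] show ?thesis by (simp add: H_def[abs_def] o_def)
  qed
  have fuc: "continuous_on {0..T} (\<lambda>t. f (ub + u t))"
    by (rule continuous_on_compose2[OF f]) (auto intro: continuous_intros uc)
  have hc: "continuous_on {0..T} (\<lambda>t. f (ub + u t) * u' t)"
    by (intro continuous_intros fuc u'c)
  have "compact ((\<lambda>t. f (ub + u t) * u' t) ` {0..T})"
    by (intro compact_continuous_image hc) auto
  then obtain L where L: "\<And>t. t\<in>{0..T} \<Longrightarrow> \<bar>f (ub + u t) * u' t\<bar> \<le> L"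
    using compact_imp_bounded bounded_iff by (metis (no_types, lifting) image_eqI real_norm_def)
  have Hlip: "\<bar>H x - H y\<bar> \<le> L * \<bar>x - y\<bar>" if "x\<in>{0..T}" "y\<in>{0..T}" for x y
    using field_differentiable_bound[of "{0..T}" H "\<lambda>t. f (ub + u t) * u' t" L x y] dH L that
    by (auto simp: convex_real_interval)
  have acH: "abs_continuous_on {0..T} H" by (rule ac_lipschitz) (use Hlip in auto)
  define z where "z t = \<phi> (u' t) + H t" for t
  have acz: "abs_continuous_on {0..T} z" unfolding z_def by (rule ac_add[OF acphi acH])
  define z' where "z' t = - lam * g t (ub + u t) + lam / T * c" for t
  define k where "k t = \<rho> t + P / T" for t
  have kint: "k integrable_on {0..T}" unfolding k_def using rho(1) by (intro integrable_add) auto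
  have kI: "integral {0..T} k = 2 * P"
  proof -
    have "integral {0..T} k = integral {0..T} \<rho> + integral {0..T} (\<lambda>t. P / T)"
      unfolding k_def using rho(1) by (intro integral_add) auto
    also have "\<dots> = P + P" using T by (simp add: P_def)
    finally show ?thesis by simp
  qed
  have dz: "(z has_real_derivative z' t) (at t within {0..T})" if tN: "t \<in> {0..T} - (N1 \<union> N2)" for t
  proof -
    obtain w where w: "((\<lambda>s. \<phi> (u' s)) has_real_derivative w) (at t within {0..T})"
         "w + f (ub + u t) * u' t + lam * g t (ub + u t) - lam / T * c = 0"
      using N2(2)[of t] tN by auto
    have "(z has_real_derivative w + f (ub + u t) * u' t) (at t within {0..T})"
      unfolding z_def[abs_def] using w(1) dH[of t] tN by (intro DERIV_add) auto
    moreover have "w + f (ub + u t) * u' t = z' t" using w(2) unfolding z'_def by simp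
    ultimately show ?thesis by simp
  qed
  have bz: "\<bar>z' t\<bar> \<le> k t" if tN: "t \<in> {0..T} - (N1 \<union> N2)" for t
  proof -
    have g1: "\<bar>g t (ub + u t)\<bar> \<le> \<rho> t" using N1(2)[of t] tN by auto
    have l: "0 \<le> lam" "lam \<le> 1" using lam by auto
    have "\<bar>z' t\<bar> \<le> \<bar>lam * g t (ub + u t)\<bar> + \<bar>lam / T * c\<bar>"
      unfolding z'_def by (simp add: abs_triangle_ineq4[of "lam / T * c" "lam * g t (ub + u t)", simplified] add.commute)
    also have "\<dots> = lam * \<bar>g t (ub + u t)\<bar> + lam / T * \<bar>c\<bar>" using l T by (simp add: abs_mult)
    also have "\<dots> \<le> 1 * \<rho> t + (1 / T) * P"
    proof (rule add_mono)
      show "lam * \<bar>g t (ub + u t)\<bar> \<le> 1 * \<rho> t" using l g1 by (intro mult_mono) auto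
      show "lam / T * \<bar>c\<bar> \<le> (1 / T) * P" using l cb T by (intro mult_mono divide_right_mono) auto
    qed
    finally show ?thesis unfolding k_def by simp
  qed
  have N12: "negligible (N1 \<union> N2)" using N1(1) N2(1) by (rule negligible_Un)
  have zdiff: "\<bar>z t2 - z t1\<bar> \<le> 2 * P" if "t1 \<in> {0..T}" "t2 \<in> {0..T}" for t1 t2
    using ac_diff_bound[OF acz N12 dz kint bz that] kI by simp
  have mono0: "\<phi> x \<le> 0 \<longleftrightarrow> x \<le> 0" for x using strict_mono_less_eq[OF phi(1), of x 0] phi(2) by simp
  have mono0': "\<phi> x \<ge> 0 \<longleftrightarrow> x \<ge> 0" for x using strict_mono_less_eq[OF phi(1), of 0 x] phi(2) by simp
  show ?thesis
  proof (rule ccontr)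
    assume nc: "\<not> \<bar>\<phi> (u' t)\<bar> \<le> 2 * integral {0..T} \<rho>"
    then have "\<phi> (u' t) > 2*P \<or> \<phi> (u' t) < -2*P" unfolding P_def by linarith
    then show False
    proof
      assume hi: "\<phi> (u' t) > 2*P"
      have "u' t > 0" using mono0[of "u' t"] hi P0 by linarith
      then obtain s where s: "s\<in>{0..T}" "u s = u t" "u' s \<le> 0"
        using level_down[OF T du per t] by blast
      have "\<phi> (u' s) \<le> 0" using s(3) mono0 by blast
      moreover have "H s = H t" unfolding H_def using s(2) by simp
      ultimately have "z t - z s \<ge> \<phi> (u' t)" unfolding z_def by simp
      with zdiff[OF s(1) t] hi show False by linarith
    next
      assume lo: "\<phi> (u' t) < -2*P"
      have "u' t < 0" using mono0'[of "u' t"] lo P0 by linarith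
      then obtain s where s: "s\<in>{0..T}" "u s = u t" "u' s \<ge> 0"
        using level_up[OF T du per t] by blast
      have "\<phi> (u' s) \<ge> 0" using s(3) mono0' by blast
      moreover have "H s = H t" unfolding H_def using s(2) by simp
      ultimately have "z s - z t \<ge> - \<phi> (u' t)" unfolding z_def by simp
      with zdiff[OF t s(1)] lo show False by linarith
    qed
  qed
qed



lemma core_bounds:
  fixes T :: real and \<phi> \<psi> \<rho> f u u' :: "real \<Rightarrow> real" and g :: "real \<Rightarrow> real \<Rightarrow> real"
  assumes T: "T > 0" and phi: "strict_mono \<phi>" "\<phi> 0 = 0" and psi: "\<And>y. \<phi> (\<psi> y) = y"
    and rho: "\<rho> integrable_on {0..T}" "\<forall>t\<in>{0..T}. \<rho> t \<ge> 0"
    and f: "continuous_on UNIV f"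
    and gb: "AE t in lebesgue_on {0..T}. \<forall>v. \<bar>g t v\<bar> \<le> \<rho> t"
    and lam: "lam \<in> {0..1}" and sol: "dagger_sol T \<phi> f g lam ub u u'"
  shows "\<forall>t\<in>{0..T}. \<bar>u' t\<bar> \<le> \<bar>\<psi> (2 * integral {0..T} \<rho>)\<bar> + \<bar>\<psi> (- (2 * integral {0..T} \<rho>))\<bar> \<and>
                    \<bar>u t\<bar> \<le> (\<bar>\<psi> (2 * integral {0..T} \<rho>)\<bar> + \<bar>\<psi> (- (2 * integral {0..T} \<rho>))\<bar>) * T"
proof -
  define Q where "Q = 2 * integral {0..T} \<rho>"
  define B where "B = \<bar>\<psi> Q\<bar> + \<bar>\<psi> (- Q)\<bar>"
  from sol have du: "\<forall>t\<in>{0..T}. (u has_real_derivative u' t) (at t within {0..T})"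
   and u'c: "continuous_on {0..T} u'" and mean: "integral {0..T} u = 0"
    unfolding dagger_sol_def in_Dt_def in_D_def by auto
  have u'b: "\<bar>u' t\<bar> \<le> B" if t: "t \<in> {0..T}" for t
  proof -
    have pb: "\<bar>\<phi> (u' t)\<bar> \<le> Q" unfolding Q_def by (rule core_phi_bound[OF T phi rho f gb lam sol t])
    then have "\<phi> (u' t) \<le> \<phi> (\<psi> Q)" "\<phi> (\<psi> (- Q)) \<le> \<phi> (u' t)" using psi by auto
    then have "u' t \<le> \<psi> Q" "\<psi> (- Q) \<le> u' t" using strict_mono_less_eq[OF phi(1)] by auto
    then show ?thesis unfolding B_def by linarith
  qed
  have uc: "continuous_on {0..T} u"
    using du by (meson DERIV_continuous continuous_on_eq_continuous_within)
  have ne: "{0..T} \<noteq> {}" using T by auto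
  obtain tm where tm: "tm \<in> {0..T}" "\<And>y. y \<in> {0..T} \<Longrightarrow> u tm \<le> u y"
    using continuous_attains_inf[OF compact_Icc ne uc] by blast
  obtain tM where tM: "tM \<in> {0..T}" "\<And>y. y \<in> {0..T} \<Longrightarrow> u y \<le> u tM"
    using continuous_attains_sup[OF compact_Icc ne uc] by blast
  have ui: "u integrable_on {0..T}" by (rule integrable_continuous_interval[OF uc])
  have "u tm \<le> 0"
  proof (rule ccontr)
    assume "\<not> u tm \<le> 0"
    have "integral {0..T} (\<lambda>_. u tm) \<le> integral {0..T} u"
      by (rule integral_le) (use ui tm in auto)
    then have "T * u tm \<le> 0" using mean T by simp
    with \<open>\<not> u tm \<le> 0\<close> T mult_pos_pos[of T "u tm"] show False by linarith
  qed
  moreover have "u tM \<ge> 0"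
  proof (rule ccontr)
    assume "\<not> u tM \<ge> 0"
    have "integral {0..T} u \<le> integral {0..T} (\<lambda>_. u tM)"
      by (rule integral_le) (use ui tM in auto)
    then have "0 \<le> T * u tM" using mean T by simp
    with \<open>\<not> u tM \<ge> 0\<close> T mult_pos_neg[of T "u tM"] show False by linarith
  qed
  ultimately obtain t0 where t0: "t0 \<in> {0..T}" "u t0 = 0"
  proof (cases "tm \<le> tM")
    case True
    have "continuous_on {tm..tM} u" by (rule continuous_on_subset[OF uc]) (use tm tM in auto)
    then obtain x where "tm \<le> x" "x \<le> tM" "u x = 0"
      using IVT'[of u tm 0 tM] \<open>u tm \<le> 0\<close> \<open>u tM \<ge> 0\<close> True by auto
    then have "x \<in> {0..T}" "u x = 0" using tm tM by auto
    then show ?thesis by (rule that)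
  next
    case False
    have "continuous_on {tM..tm} u" by (rule continuous_on_subset[OF uc]) (use tm tM in auto)
    then obtain x where "tM \<le> x" "x \<le> tm" "u x = 0"
      using IVT2'[of u tm 0 tM] \<open>u tm \<le> 0\<close> \<open>u tM \<ge> 0\<close> False by auto
    then have "x \<in> {0..T}" "u x = 0" using tm tM by auto
    then show ?thesis by (rule that)
  qed
  have ub: "\<bar>u t\<bar> \<le> B * T" if t: "t \<in> {0..T}" for t
  proof -
    have "norm (u t - u t0) \<le> B * norm (t - t0)"
      by (rule field_differentiable_bound[of "{0..T}" u u' B t t0])
         (use du u'b t t0 in \<open>auto simp: convex_real_interval\<close>)
    moreover have "\<bar>t - t0\<bar> \<le> T" using t t0 by auto
    moreover have "B \<ge> 0" unfolding B_def by simp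
    ultimately have "\<bar>u t\<bar> \<le> B * \<bar>t - t0\<bar>" "B * \<bar>t - t0\<bar> \<le> B * T"
      using t0 by (auto intro: mult_left_mono)
    then show ?thesis by linarith
  qed
  show ?thesis using u'b ub unfolding B_def Q_def by auto
qed



theorem proposition3p1:
  fixes T :: real and \<phi> \<rho> :: "real \<Rightarrow> real"
  assumes T: "T > 0"
    and phi: "incr_homeo \<phi>" "\<phi> 0 = 0"
    and rho: "integrable (lebesgue_on {0..T}) \<rho>" "\<forall>t\<in>{0..T}. \<rho> t \<ge> 0"
  shows
   "(\<exists>K>0. \<forall>f g. continuous_on UNIV f \<and> caratheodory T g \<and>
        (AE t in lebesgue_on {0..T}. \<forall>u. \<bar>g t u\<bar> \<le> \<rho> t) \<longrightarrow>
        (\<forall>lam ub u u'. lam \<in> {0..1} \<and> dagger_sol T \<phi> f g lam ub u u' \<longrightarrow>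
           integral {0..T} (\<lambda>t. \<bar>u' t\<bar>) \<le> K \<and> (\<forall>t\<in>{0..T}. \<bar>u t\<bar> \<le> K)))
    \<and>
    (\<forall>f. continuous_on UNIV f \<longrightarrow>
      (\<forall>M>0. \<exists>M'>0. \<forall>g. caratheodory T g \<and>
          (AE t in lebesgue_on {0..T}. \<forall>u. \<bar>g t u\<bar> \<le> \<rho> t) \<longrightarrow>
          (\<forall>ub u u'. \<bar>ub\<bar> \<le> M \<and> dagger_sol T \<phi> f g 1 ub u u' \<longrightarrow>
             (SUP t\<in>{0..T}. \<bar>u t\<bar>) + (SUP t\<in>{0..T}. \<bar>u' t\<bar>) \<le> M')))"
proof -
  have sm: "strict_mono \<phi>" using phi(1) unfolding incr_homeo_def by blast
  obtain \<psi> where "homeomorphism UNIV UNIV \<phi> \<psi>" using phi(1) unfolding incr_homeo_def by blast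
  then have psi: "\<And>y. \<phi> (\<psi> y) = y" unfolding homeomorphism_def by auto
  have ab: "{0..T} \<in> sets lebesgue" by (rule sets_completionI_sets) (simp add: borel_closed)
  have rhoi: "\<rho> integrable_on {0..T}" by (rule integrable_on_lebesgue_on[OF rho(1) ab])
  define B where "B = \<bar>\<psi> (2 * integral {0..T} \<rho>)\<bar> + \<bar>\<psi> (- (2 * integral {0..T} \<rho>))\<bar>"
  have B0: "B \<ge> 0" unfolding B_def by simp
  note cb = core_bounds[OF T sm phi(2) psi rhoi rho(2), folded B_def]
  have part1: "\<forall>f g. continuous_on UNIV f \<and> caratheodory T g \<and>
        (AE t in lebesgue_on {0..T}. \<forall>u. \<bar>g t u\<bar> \<le> \<rho> t) \<longrightarrow>
        (\<forall>lam ub u u'. lam \<in> {0..1} \<and> dagger_sol T \<phi> f g lam ub u u' \<longrightarrow>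
           integral {0..T} (\<lambda>t. \<bar>u' t\<bar>) \<le> B * T + 1 \<and> (\<forall>t\<in>{0..T}. \<bar>u t\<bar> \<le> B * T + 1))"
  proof (intro allI impI)
    fix f :: "real \<Rightarrow> real" and g :: "real \<Rightarrow> real \<Rightarrow> real" and lam ub :: real and u u' :: "real \<Rightarrow> real"
    assume fg: "continuous_on UNIV f \<and> caratheodory T g \<and> (AE t in lebesgue_on {0..T}. \<forall>u. \<bar>g t u\<bar> \<le> \<rho> t)"
      and ls: "lam \<in> {0..1} \<and> dagger_sol T \<phi> f g lam ub u u'"
    have bnd: "\<forall>t\<in>{0..T}. \<bar>u' t\<bar> \<le> B \<and> \<bar>u t\<bar> \<le> B * T"
      using cb[of f g lam ub u u'] fg ls by blast
    have u'c: "continuous_on {0..T} u'" using ls unfolding dagger_sol_def in_Dt_def in_D_def by auto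
    have "integral {0..T} (\<lambda>t. \<bar>u' t\<bar>) \<le> integral {0..T} (\<lambda>t. B)"
      by (rule integral_le) (use bnd in \<open>auto intro!: integrable_continuous_interval continuous_intros u'c\<close>)
    also have "\<dots> = B * T" using T by simp
    finally show "integral {0..T} (\<lambda>t. \<bar>u' t\<bar>) \<le> B * T + 1 \<and> (\<forall>t\<in>{0..T}. \<bar>u t\<bar> \<le> B * T + 1)"
      using bnd by force
  qed
  have part2: "\<forall>f. continuous_on UNIV f \<longrightarrow>
      (\<forall>M>0. \<exists>M'>0. \<forall>g. caratheodory T g \<and>
          (AE t in lebesgue_on {0..T}. \<forall>u. \<bar>g t u\<bar> \<le> \<rho> t) \<longrightarrow>
          (\<forall>ub u u'. \<bar>ub\<bar> \<le> M \<and> dagger_sol T \<phi> f g 1 ub u u' \<longrightarrow>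
             (SUP t\<in>{0..T}. \<bar>u t\<bar>) + (SUP t\<in>{0..T}. \<bar>u' t\<bar>) \<le> M'))"
  proof (intro allI impI)
    fix f :: "real \<Rightarrow> real" and M :: real
    assume f: "continuous_on UNIV f" and "M > 0"
    show "\<exists>M'>0. \<forall>g. caratheodory T g \<and>
          (AE t in lebesgue_on {0..T}. \<forall>u. \<bar>g t u\<bar> \<le> \<rho> t) \<longrightarrow>
          (\<forall>ub u u'. \<bar>ub\<bar> \<le> M \<and> dagger_sol T \<phi> f g 1 ub u u' \<longrightarrow>
             (SUP t\<in>{0..T}. \<bar>u t\<bar>) + (SUP t\<in>{0..T}. \<bar>u' t\<bar>) \<le> M')"
    proof (intro exI[of _ "B * T + B + 1"] conjI allI impI)
      show "B * T + B + 1 > 0" using B0 T mult_nonneg_nonneg[of B T] by linarith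
      fix g :: "real \<Rightarrow> real \<Rightarrow> real" and ub :: real and u u' :: "real \<Rightarrow> real"
      assume g: "caratheodory T g \<and> (AE t in lebesgue_on {0..T}. \<forall>u. \<bar>g t u\<bar> \<le> \<rho> t)"
        and s: "\<bar>ub\<bar> \<le> M \<and> dagger_sol T \<phi> f g 1 ub u u'"
      have bnd: "\<forall>t\<in>{0..T}. \<bar>u' t\<bar> \<le> B \<and> \<bar>u t\<bar> \<le> B * T"
        using cb[of f g 1 ub u u'] f g s by auto
      have ne: "{0..T} \<noteq> {}" using T by auto
      have "(SUP t\<in>{0..T}. \<bar>u t\<bar>) \<le> B * T" by (rule cSUP_least[OF ne]) (use bnd in auto)
      moreover have "(SUP t\<in>{0..T}. \<bar>u' t\<bar>) \<le> B" by (rule cSUP_least[OF ne]) (use bnd in auto)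
      ultimately show "(SUP t\<in>{0..T}. \<bar>u t\<bar>) + (SUP t\<in>{0..T}. \<bar>u' t\<bar>) \<le> B * T + B + 1" by linarith
    qed
  qed
  have "B * T + 1 > 0" using B0 T mult_nonneg_nonneg[of B T] by linarith
  then show ?thesis using part1 part2 by blast
qed

end
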